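(* Consider a secure index coding problem $(W_i\mid A_i,P_i)$, $i\in[m]$, on $n$ messages, a securely achievable symmetric rate $R$, and a set function $g:2^{[n]}\to\mathbb R$ satisfying conditions (G1)–(G6) of the context with $R_i=R$ for all $i\in[n]$. Then for any $S\subseteq S'\subseteq[n]$, $$g(S')\ge g(S)+R\cdot h_{\rm MAIS}(S,S').$$ Furthermore, for any $S\subseteq S'\subseteq[n]$ with $S - S'$, we have $h_{\rm MAIS}(S,S')=0$.
   Context: Secure index coding: $n$ independent uniformly distributed messages $X_i\in\{0,1\}^{t_i}$; $m$ parties, party $i$ with side information $A_i\subseteq[n]$, requested set $W_i\subseteq[n]\setminus A_i$ (possibly empty), interfering set $B_i=[n]\setminus(A_i\cup W_i)$, prohibited set $P_i\subseteq B_i$. A $(\mathbf t,M)$ secure index code is a deterministic surjective encoder $Y=\phi(X_{[n]})\in\{1,\ldots,M\}$ with $H(X_{W_i}\mid Y,X_{A_i})=0$ for all $i$ and $I(X_j;Y\mid X_{A_i})=0$ for all $j\in P_i$; rates $R_i=t_i/\log M$. Standing assumption: the problem is feasible (its symmetric secure capacity is positive). Conditions on $g$ (for a rate tuple $(R_i)$): (G1) $\sum_{i\in W}R_i=g(B\cup W)-g(B)=g(W)$ for all $i\in[m]$, $W\subseteq W_i$, $B\subseteq (B_i\cup W_i)\setminus W$; (G2) $g(\emptyset)=0$; (G3) $g([n])\le1$; (G4) $g(S)\le g(S')$ whenever $S\subseteq S'$; (G5) $g(S\cap S')+g(S\cup S')\le g(S)+g(S')$; (G6) $g(B_i)=g(B_i\setminus\{j\})$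 for all $j\in P_i$, $i\in[m]$. Acyclic sets: $K\subseteq[n]\setminus S$ is acyclic w.r.t. $S$ if it can be ordered $K=\{k_1,\ldots,k_r\}$ so that for each $\ell\in[r]$ some party $j_\ell$ has $k_\ell\in W_{j_\ell}$ and $S\cup\{k_1,\ldots,k_\ell\}\subseteq B_{j_\ell}\cup W_{j_\ell}$; for $S\subseteq S'$, $h_{\rm MAIS}(S,S')=\max\{|K|:K\subseteq S'\setminus S\text{ acyclic w.r.t. }S\}$. Relation $S - S'$: for each $i$ with $P_i\ne\emptyset$ and $T\subseteq[n]\setminus B_i$, $N(i,T)=\{T\cup B_i\setminus\{j\}:j\in P_i\}\cup\{T\cup B_i\}$; repeatedly merge intersecting such families until pairwise disjoint; $S - S'$ iff $S,S'$ lie in the same resulting family. *)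

theory Defs
  imports Complex_Main
begin

(* Messages are indexed by [n] = {1..n}, parties by [m] = {1..m}.
   A problem instance is given by n, m and the maps A (side information),
   W (requested sets), P (prohibited sets). *)

definition B_set :: "nat \<Rightarrow> (nat \<Rightarrow> nat set) \<Rightarrow> (nat \<Rightarrow> nat set) \<Rightarrow> nat \<Rightarrow> nat set" where
  "B_set n A W i = {1..n} - (A i \<union> W i)"

definition well_formed_problem ::
  "nat \<Rightarrow> nat \<Rightarrow> (nat \<Rightarrow> nat set) \<Rightarrow> (nat \<Rightarrow> nat set) \<Rightarrow> (nat \<Rightarrow> nat set) \<Rightarrow> bool" where
  "well_formed_problem n m A W P \<longleftrightarrow>
     (\<forall>i\<in>{1..m}. A i \<subseteq> {1..n} \<and> W i \<subseteq> {1..n} - A i \<and> P i \<subseteq> B_set n A W i)"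

(* Realisations of the message tuple X_[n]: X_k \<in> {0,1}^{t_k}, encoded as a bool list
   of length t_k (and [] outside [n]). The messages are independent and uniform,
   i.e. the tuple is uniform on this finite set. *)
definition msgs :: "nat \<Rightarrow> (nat \<Rightarrow> nat) \<Rightarrow> (nat \<Rightarrow> bool list) set" where
  "msgs n t = {x. \<forall>k. (k \<in> {1..n} \<longrightarrow> length (x k) = t k) \<and> (k \<notin> {1..n} \<longrightarrow> x k = [])}"

definition agree_on :: "nat set \<Rightarrow> (nat \<Rightarrow> bool list) \<Rightarrow> (nat \<Rightarrow> bool list) \<Rightarrow> bool" where
  "agree_on S x x' \<longleftrightarrow> (\<forall>k\<in>S. x k = x' k)"

(* Decodability H(X_{W_i} | Y, X_{A_i}) = 0 (all message tuples have positive probability).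
   Security I(X_j ; Y | X_{A_i}) = 0 written out as conditional independence of
   X_j and Y given X_{A_i} = a, for the uniform distribution on msgs n t
   (probabilities written as counts, denominators cleared). *)
definition secure_index_code ::
  "nat \<Rightarrow> nat \<Rightarrow> (nat \<Rightarrow> nat set) \<Rightarrow> (nat \<Rightarrow> nat set) \<Rightarrow> (nat \<Rightarrow> nat set)
   \<Rightarrow> (nat \<Rightarrow> nat) \<Rightarrow> nat \<Rightarrow> ((nat \<Rightarrow> bool list) \<Rightarrow> nat) \<Rightarrow> bool" where
  "secure_index_code n m A W P t M phi \<longleftrightarrow>
     phi ` msgs n t = {1..M} \<and>
     (\<forall>i\<in>{1..m}. \<forall>x\<in>msgs n t. \<forall>x'\<in>msgs n t.
        phi x = phi x' \<and> agree_on (A i) x x' \<longrightarrow> agree_on (W i) x x') \<and>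
     (\<forall>i\<in>{1..m}. \<forall>j\<in>P i. \<forall>a y v.
        card {x\<in>msgs n t. agree_on (A i) x a \<and> x j = v \<and> phi x = y}
          * card {x\<in>msgs n t. agree_on (A i) x a}
        = card {x\<in>msgs n t. agree_on (A i) x a \<and> x j = v}
          * card {x\<in>msgs n t. agree_on (A i) x a \<and> phi x = y})"

definition sec_achievable_sym ::
  "nat \<Rightarrow> nat \<Rightarrow> (nat \<Rightarrow> nat set) \<Rightarrow> (nat \<Rightarrow> nat set) \<Rightarrow> (nat \<Rightarrow> nat set) \<Rightarrow> real \<Rightarrow> bool" where
  "sec_achievable_sym n m A W P R \<longleftrightarrow>
     (\<exists>t M phi. secure_index_code n m A W P t M phi \<and>
        (\<forall>k\<in>{1..n}. R \<le> real (t k) / log 2 (real M)))"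

(* Standing assumption: symmetric secure capacity (sup of achievable symmetric rates) is positive. *)
definition feasible ::
  "nat \<Rightarrow> nat \<Rightarrow> (nat \<Rightarrow> nat set) \<Rightarrow> (nat \<Rightarrow> nat set) \<Rightarrow> (nat \<Rightarrow> nat set) \<Rightarrow> bool" where
  "feasible n m A W P \<longleftrightarrow> (\<exists>R>0. sec_achievable_sym n m A W P R)"

definition G_conditions ::
  "nat \<Rightarrow> nat \<Rightarrow> (nat \<Rightarrow> nat set) \<Rightarrow> (nat \<Rightarrow> nat set) \<Rightarrow> (nat \<Rightarrow> nat set) \<Rightarrow> real
   \<Rightarrow> (nat set \<Rightarrow> real) \<Rightarrow> bool" where
  "G_conditions n m A W P R g \<longleftrightarrow>
     (\<forall>i\<in>{1..m}. \<forall>V. V \<subseteq> W i \<longrightarrow> (\<forall>Bs. Bs \<subseteq> (B_set n A W i \<union> W i) - V \<longrightarrow>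
        (\<Sum>k\<in>V. R) = g (Bs \<union> V) - g Bs \<and> g (Bs \<union> V) - g Bs = g V)) \<and>
     g {} = 0 \<and>
     g {1..n} \<le> 1 \<and>
     (\<forall>S S'. S \<subseteq> S' \<and> S' \<subseteq> {1..n} \<longrightarrow> g S \<le> g S') \<and>
     (\<forall>S S'. S \<subseteq> {1..n} \<and> S' \<subseteq> {1..n} \<longrightarrow> g (S \<inter> S') + g (S \<union> S') \<le> g S + g S') \<and>
     (\<forall>i\<in>{1..m}. \<forall>j\<in>P i. g (B_set n A W i) = g (B_set n A W i - {j}))"

definition acyclic_wrt ::
  "nat \<Rightarrow> nat \<Rightarrow> (nat \<Rightarrow> nat set) \<Rightarrow> (nat \<Rightarrow> nat set) \<Rightarrow> nat set \<Rightarrow> nat set \<Rightarrow> bool" where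
  "acyclic_wrt n m A W S K \<longleftrightarrow> K \<subseteq> {1..n} - S \<and>
     (\<exists>ks. distinct ks \<and> set ks = K \<and>
        (\<forall>l<length ks. \<exists>j\<in>{1..m}. ks ! l \<in> W j \<and>
            S \<union> set (take (Suc l) ks) \<subseteq> B_set n A W j \<union> W j))"

definition h_MAIS ::
  "nat \<Rightarrow> nat \<Rightarrow> (nat \<Rightarrow> nat set) \<Rightarrow> (nat \<Rightarrow> nat set) \<Rightarrow> nat set \<Rightarrow> nat set \<Rightarrow> nat" where
  "h_MAIS n m A W S S' = Max {card K | K. K \<subseteq> S' - S \<and> acyclic_wrt n m A W S K}"

definition N_fam ::
  "nat \<Rightarrow> (nat \<Rightarrow> nat set) \<Rightarrow> (nat \<Rightarrow> nat set) \<Rightarrow> (nat \<Rightarrow> nat set) \<Rightarrow> nat \<Rightarrow> nat set \<Rightarrow> nat set set" where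
  "N_fam n A W P i T = {T \<union> B_set n A W i - {j} | j. j \<in> P i} \<union> {T \<union> B_set n A W i}"

(* Merging intersecting families until pairwise disjoint yields the connected
   components of the "lie in a common family" relation; S - S' iff S and S'
   are in the same component, i.e. related by the transitive closure. *)
definition dash_rel ::
  "nat \<Rightarrow> nat \<Rightarrow> (nat \<Rightarrow> nat set) \<Rightarrow> (nat \<Rightarrow> nat set) \<Rightarrow> (nat \<Rightarrow> nat set) \<Rightarrow> nat set rel" where
  "dash_rel n m A W P = ({(X, Y). \<exists>i\<in>{1..m}. \<exists>T. P i \<noteq> {} \<and> T \<subseteq> {1..n} - B_set n A W i \<and>
        X \<in> N_fam n A W P i T \<and> Y \<in> N_fam n A W P i T})\<^sup>+"

end

theory Submission
  imports Defs
begin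

lemma fiber_card:
  assumes "finite L" "finite S" "\<forall>s\<in>S. f s \<in> L"
  shows "card S = (\<Sum>u\<in>L. card {s\<in>S. f s = u})"
proof -
  have "S = (\<Union>u\<in>L. {s\<in>S. f s = u})" using assms(3) by auto
  then have "card S = card (\<Union>u\<in>L. {s\<in>S. f s = u})" by simp
  also have "\<dots> = (\<Sum>u\<in>L. card {s\<in>S. f s = u})"
    by (rule card_UN_disjoint) (use assms in auto)
  finally show ?thesis .
qed

lemma finite_len: "finite {u::bool list. length u = k}"
proof -
  have "{u::bool list. length u = k} \<subseteq> {xs. set xs \<subseteq> UNIV \<and> length xs \<le> k}" by auto
  then show ?thesis using finite_lists_length_le[of "UNIV::bool set" k] finite_subset by auto
qed

lemma nonempty_len: "card {u::bool list. length u = k} > 0"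
proof -
  have "replicate k True \<in> {u::bool list. length u = k}" by simp
  then show ?thesis using finite_len card_gt_0_iff by blast
qed

lemma finite_msgs: "finite (msgs n t)"
proof -
  let ?N = "Max (t ` {1..n})"
  have "msgs n t \<subseteq> {f. \<forall>x. (x \<in> {1..n} \<longrightarrow> f x \<in> {xs. set xs \<subseteq> UNIV \<and> length xs \<le> ?N}) \<and> (x \<notin> {1..n} \<longrightarrow> f x = [])}"
    unfolding msgs_def by auto
  moreover have "finite \<dots>"
    by (rule finite_set_of_finite_funs) (use finite_lists_length_le[of "UNIV::bool set" ?N] in auto)
  ultimately show ?thesis using finite_subset by blast
qed

lemma upd_msgs: "x \<in> msgs n t \<Longrightarrow> l \<in> {1..n} \<Longrightarrow> length u = t l \<Longrightarrow> x(l:=u) \<in> msgs n t"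
  unfolding msgs_def by auto

lemma agree_refl: "agree_on D x x" unfolding agree_on_def by auto

lemma swap_card:
  assumes "j \<notin> D" "j \<in> {1..n}" "length v = t j" "length v' = t j"
  shows "card {x'\<in>msgs n t. agree_on D x' x \<and> x' j = v} = card {x'\<in>msgs n t. agree_on D x' x \<and> x' j = v'}"
proof (rule bij_betw_same_card[of "\<lambda>z. z(j:=v')"], rule bij_betw_byWitness[of _ "\<lambda>z. z(j:=v)"])
  show "\<forall>a\<in>{x' \<in> msgs n t. agree_on D x' x \<and> x' j = v}. a(j := v', j := v) = a" by auto
  show "\<forall>a'\<in>{x' \<in> msgs n t. agree_on D x' x \<and> x' j = v'}. a'(j := v, j := v') = a'" by auto
  show "(\<lambda>z. z(j := v')) ` {x' \<in> msgs n t. agree_on D x' x \<and> x' j = v} \<subseteq> {x' \<in> msgs n t. agree_on D x' x \<and> x' j = v'}"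
    using assms upd_msgs by (auto simp: agree_on_def)
  show "(\<lambda>z. z(j := v)) ` {x' \<in> msgs n t. agree_on D x' x \<and> x' j = v'} \<subseteq> {x' \<in> msgs n t. agree_on D x' x \<and> x' j = v}"
    using assms upd_msgs by (auto simp: agree_on_def)
qed

lemma split_card:
  assumes "l \<in> D" "l \<in> {1..n}"
  shows "card {s\<in>msgs n t. agree_on (D - {l}) s x \<and> Q s}
       = (\<Sum>u\<in>{u. length u = t l}. card {s\<in>msgs n t. agree_on D s (x(l:=u)) \<and> Q s})"
proof -
  have "card {s\<in>msgs n t. agree_on (D - {l}) s x \<and> Q s}
      = (\<Sum>u\<in>{u. length u = t l}. card {s\<in>{s\<in>msgs n t. agree_on (D - {l}) s x \<and> Q s}. s l = u})"
  proof (rule fiber_card)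
    show "finite {u::bool list. length u = t l}" by (rule finite_len)
    show "finite {s\<in>msgs n t. agree_on (D - {l}) s x \<and> Q s}" using finite_msgs by simp
    show "\<forall>s\<in>{s\<in>msgs n t. agree_on (D - {l}) s x \<and> Q s}. s l \<in> {u. length u = t l}"
      using assms(2) unfolding msgs_def by blast
  qed
  also have "\<dots> = (\<Sum>u\<in>{u. length u = t l}. card {s\<in>msgs n t. agree_on D s (x(l:=u)) \<and> Q s})"
  proof (rule sum.cong[OF refl])
    fix u
    have "{s\<in>{s\<in>msgs n t. agree_on (D - {l}) s x \<and> Q s}. s l = u} = {s\<in>msgs n t. agree_on D s (x(l:=u)) \<and> Q s}"
      using assms(1) unfolding agree_on_def by auto
    then show "card {s\<in>{s\<in>msgs n t. agree_on (D - {l}) s x \<and> Q s}. s l = u} = card {s\<in>msgs n t. agree_on D s (x(l:=u)) \<and> Q s}"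
      by simp
  qed
  finally show ?thesis .
qed

definition pp :: "nat \<Rightarrow> (nat \<Rightarrow> nat) \<Rightarrow> ((nat \<Rightarrow> bool list) \<Rightarrow> nat) \<Rightarrow> nat set \<Rightarrow> (nat \<Rightarrow> bool list) \<Rightarrow> nat \<Rightarrow> real" where
  "pp n t phi S x y = real (card {x'\<in>msgs n t. agree_on ({1..n} - S) x' x \<and> phi x' = y})
      / real (card {x'\<in>msgs n t. agree_on ({1..n} - S) x' x})"

context
  fixes n m A W P t M phi
  assumes wf: "well_formed_problem n m A W P"
    and code: "secure_index_code n m A W P t M phi"
begin

lemma jprops: "i \<in> {1..m} \<Longrightarrow> j \<in> P i \<Longrightarrow> j \<in> {1..n} \<and> j \<notin> A i \<and> j \<notin> W i"
  using wf unfolding well_formed_problem_def B_set_def by blast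

lemma AW_sub: "i \<in> {1..m} \<Longrightarrow> A i \<union> W i \<subseteq> {1..n}"
  using wf unfolding well_formed_problem_def by blast

lemma sec_inv:
  assumes i: "i \<in> {1..m}" and j: "j \<in> P i" and x: "x \<in> msgs n t"
    and lv: "length v = t j" and lv': "length v' = t j"
  shows "card {x'\<in>msgs n t. agree_on (A i) x' x \<and> x' j = v \<and> phi x' = y}
       = card {x'\<in>msgs n t. agree_on (A i) x' x \<and> x' j = v' \<and> phi x' = y}"
proof -
  have jp: "j \<in> {1..n}" "j \<notin> A i" using jprops[OF i j] by auto
  have sec: "\<And>v. card {x'\<in>msgs n t. agree_on (A i) x' x \<and> x' j = v \<and> phi x' = y}
          * card {x'\<in>msgs n t. agree_on (A i) x' x}
        = card {x'\<in>msgs n t. agree_on (A i) x' x \<and> x' j = v}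
          * card {x'\<in>msgs n t. agree_on (A i) x' x \<and> phi x' = y}"
    using code i j unfolding secure_index_code_def by blast
  have sw: "card {x'\<in>msgs n t. agree_on (A i) x' x \<and> x' j = v} = card {x'\<in>msgs n t. agree_on (A i) x' x \<and> x' j = v'}"
    by (rule swap_card) (use jp lv lv' in auto)
  have pos: "card {x'\<in>msgs n t. agree_on (A i) x' x} > 0"
    using x finite_msgs[of n t] agree_refl[of "A i" x] card_gt_0_iff by fastforce
  have "card {x'\<in>msgs n t. agree_on (A i) x' x \<and> x' j = v \<and> phi x' = y} * card {x'\<in>msgs n t. agree_on (A i) x' x}
     = card {x'\<in>msgs n t. agree_on (A i) x' x \<and> x' j = v' \<and> phi x' = y} * card {x'\<in>msgs n t. agree_on (A i) x' x}"
    unfolding sec sw ..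
  then show ?thesis using pos by simp
qed

lemma base_inv:
  assumes i: "i \<in> {1..m}" and j: "j \<in> P i" and x: "x \<in> msgs n t"
    and lv: "length v = t j" and lv': "length v' = t j"
  shows "card {x'\<in>msgs n t. agree_on (A i \<union> W i) x' x \<and> x' j = v \<and> phi x' = y}
       = card {x'\<in>msgs n t. agree_on (A i \<union> W i) x' x \<and> x' j = v' \<and> phi x' = y}"
proof -
  have dec: "\<And>z z'. z \<in> msgs n t \<Longrightarrow> z' \<in> msgs n t \<Longrightarrow> phi z = phi z' \<Longrightarrow> agree_on (A i) z z' \<Longrightarrow> agree_on (W i) z z'"
    using code i unfolding secure_index_code_def by blast
  define Q where "Q = (\<exists>z\<in>msgs n t. agree_on (A i) z x \<and> phi z = y \<and> agree_on (W i) z x)"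
  have key: "{x'\<in>msgs n t. agree_on (A i \<union> W i) x' x \<and> x' j = w \<and> phi x' = y}
     = (if Q then {x'\<in>msgs n t. agree_on (A i) x' x \<and> x' j = w \<and> phi x' = y} else {})" for w
  proof (cases Q)
    case True
    then obtain z where z: "z\<in>msgs n t" "agree_on (A i) z x" "phi z = y" "agree_on (W i) z x"
      unfolding Q_def by blast
    have "agree_on (W i) x' x" if "x' \<in> msgs n t" "agree_on (A i) x' x" "phi x' = y" for x'
    proof -
      have "agree_on (A i) x' z" using that(2) z(2) unfolding agree_on_def by auto
      then have "agree_on (W i) x' z" using dec[OF that(1) z(1)] that(3) z(3) by simp
      then show ?thesis using z(4) unfolding agree_on_def by auto
    qed
    then show ?thesis using True unfolding agree_on_def by (simp add: set_eq_iff) blast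
  next
    case False
    have "{x'\<in>msgs n t. agree_on (A i \<union> W i) x' x \<and> x' j = w \<and> phi x' = y} = {}"
    proof (rule ccontr)
      assume "{x'\<in>msgs n t. agree_on (A i \<union> W i) x' x \<and> x' j = w \<and> phi x' = y} \<noteq> {}"
      then obtain z where "z\<in>msgs n t" "agree_on (A i \<union> W i) z x" "phi z = y" by blast
      then have Q unfolding Q_def agree_on_def by blast
      then show False using False by simp
    qed
    then show ?thesis using False by simp
  qed
  show ?thesis unfolding key[of v] key[of v'] using sec_inv[OF i j x lv lv'] by simp
qed

lemma ind_inv:
  assumes i: "i \<in> {1..m}" and j: "j \<in> P i"
  shows "finite F \<Longrightarrow> F \<subseteq> A i \<union> W i \<Longrightarrow> \<forall>x\<in>msgs n t. \<forall>v v'. length v = t j \<longrightarrow> length v' = t j \<longrightarrow>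
     card {x'\<in>msgs n t. agree_on (A i \<union> W i - F) x' x \<and> x' j = v \<and> phi x' = y}
       = card {x'\<in>msgs n t. agree_on (A i \<union> W i - F) x' x \<and> x' j = v' \<and> phi x' = y}"
proof (induction F rule: finite_induct)
  case empty
  show ?case unfolding Diff_empty using base_inv[OF i j] by blast
next
  case (insert l F)
  have l: "l \<in> A i \<union> W i - F" "l \<in> {1..n}" using insert.prems insert.hyps AW_sub[OF i] by auto
  have eq: "A i \<union> W i - insert l F = (A i \<union> W i - F) - {l}" by auto
  show ?case
  proof (intro ballI allI impI)
    fix x v v' assume x: "x \<in> msgs n t" and lv: "length (v::bool list) = t j" and lv': "length (v'::bool list) = t j"
    have "card {x'\<in>msgs n t. agree_on (A i \<union> W i - insert l F) x' x \<and> x' j = v \<and> phi x' = y}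
       = (\<Sum>u\<in>{u. length u = t l}. card {s\<in>msgs n t. agree_on (A i \<union> W i - F) s (x(l:=u)) \<and> (s j = v \<and> phi s = y)})"
      unfolding eq by (rule split_card[OF l])
    also have "\<dots> = (\<Sum>u\<in>{u. length u = t l}. card {s\<in>msgs n t. agree_on (A i \<union> W i - F) s (x(l:=u)) \<and> (s j = v' \<and> phi s = y)})"
    proof (rule sum.cong[OF refl])
      fix u assume "u \<in> {u::bool list. length u = t l}"
      then have xu: "x(l:=u) \<in> msgs n t" using upd_msgs[OF x l(2)] by simp
      have IH: "\<forall>x\<in>msgs n t. \<forall>v v'. length v = t j \<longrightarrow> length v' = t j \<longrightarrow>
     card {x'\<in>msgs n t. agree_on (A i \<union> W i - F) x' x \<and> x' j = v \<and> phi x' = y}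
       = card {x'\<in>msgs n t. agree_on (A i \<union> W i - F) x' x \<and> x' j = v' \<and> phi x' = y}"
        using insert.IH insert.prems by blast
      show "card {s\<in>msgs n t. agree_on (A i \<union> W i - F) s (x(l:=u)) \<and> (s j = v \<and> phi s = y)}
          = card {s\<in>msgs n t. agree_on (A i \<union> W i - F) s (x(l:=u)) \<and> (s j = v' \<and> phi s = y)}"
        using IH[rule_format, OF xu lv lv'] by simp
    qed
    also have "\<dots> = card {x'\<in>msgs n t. agree_on (A i \<union> W i - insert l F) x' x \<and> x' j = v' \<and> phi x' = y}"
      unfolding eq by (rule split_card[OF l, symmetric])
    finally show "card {x'\<in>msgs n t. agree_on (A i \<union> W i - insert l F) x' x \<and> x' j = v \<and> phi x' = y}
       = card {x'\<in>msgs n t. agree_on (A i \<union> W i - insert l F) x' x \<and> x' j = v' \<and> phi x' = y}" .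
  qed
qed

lemma D_inv:
  assumes i: "i \<in> {1..m}" and j: "j \<in> P i" and D: "D \<subseteq> A i \<union> W i" and x: "x \<in> msgs n t"
    and lv: "length v = t j" and lv': "length v' = t j"
  shows "card {x'\<in>msgs n t. agree_on D x' x \<and> x' j = v \<and> phi x' = y}
       = card {x'\<in>msgs n t. agree_on D x' x \<and> x' j = v' \<and> phi x' = y}"
proof -
  have fin: "finite (A i \<union> W i - D)" using AW_sub[OF i] finite_subset by blast
  have dd: "A i \<union> W i - (A i \<union> W i - D) = D" using D by blast
  show ?thesis using ind_inv[OF i j fin Diff_subset] x lv lv' unfolding dd by blast
qed

lemma tot_sum:
  "card {s\<in>msgs n t. agree_on E s x} = (\<Sum>y'\<in>{1..M}. card {s\<in>msgs n t. agree_on E s x \<and> phi s = y'})"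
proof -
  have im: "phi ` msgs n t = {1..M}" using code unfolding secure_index_code_def by blast
  have "card {s\<in>msgs n t. agree_on E s x} = (\<Sum>y'\<in>{1..M}. card {s\<in>{s\<in>msgs n t. agree_on E s x}. phi s = y'})"
    by (rule fiber_card) (use finite_msgs im in auto)
  then show ?thesis by simp
qed

lemma pstep:
  assumes i: "i \<in> {1..m}" and j: "j \<in> P i" and T: "T \<subseteq> {1..n} - B_set n A W i" and x: "x \<in> msgs n t"
  shows "pp n t phi (T \<union> B_set n A W i - {j}) x y = pp n t phi (T \<union> B_set n A W i) x y"
proof -
  define D where "D = {1..n} - (T \<union> B_set n A W i)"
  have jB: "j \<in> B_set n A W i" using wf i j unfolding well_formed_problem_def by blast
  have jn: "j \<in> {1..n}" using jB unfolding B_set_def by blast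
  have Dsub: "D \<subseteq> A i \<union> W i" unfolding D_def B_set_def by blast
  have jD: "j \<notin> D" using jB unfolding D_def by blast
  have e1: "{1..n} - (T \<union> B_set n A W i - {j}) = insert j D" using jn jB unfolding D_def by blast
  have e2: "{1..n} - (T \<union> B_set n A W i) = D" unfolding D_def ..
  have xj: "length (x j) = t j" using x jn unfolding msgs_def by blast
  define c where "c = card {u::bool list. length u = t j}"
  have cpos: "c > 0" unfolding c_def by (rule nonempty_len)
  have cnt: "card {s\<in>msgs n t. agree_on D s x \<and> phi s = y'} = c * card {s\<in>msgs n t. agree_on (insert j D) s x \<and> phi s = y'}" for y'
  proof -
    have "insert j D - {j} = D" using jD by blast
    then have "card {s\<in>msgs n t. agree_on D s x \<and> phi s = y'} = card {s\<in>msgs n t. agree_on (insert j D - {j}) s x \<and> phi s = y'}"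
      by simp
    also have "\<dots> = (\<Sum>u\<in>{u. length u = t j}. card {s\<in>msgs n t. agree_on (insert j D) s (x(j:=u)) \<and> phi s = y'})"
      by (rule split_card) (use jn in auto)
    also have "\<dots> = (\<Sum>u\<in>{u::bool list. length u = t j}. card {s\<in>msgs n t. agree_on (insert j D) s x \<and> phi s = y'})"
    proof (rule sum.cong[OF refl])
      fix u assume u: "u \<in> {u::bool list. length u = t j}"
      have "{s\<in>msgs n t. agree_on (insert j D) s (x(j:=u)) \<and> phi s = y'} = {s\<in>msgs n t. agree_on D s x \<and> s j = u \<and> phi s = y'}"
        using jD unfolding agree_on_def by auto
      also have "card \<dots> = card {s\<in>msgs n t. agree_on D s x \<and> s j = x j \<and> phi s = y'}"
        by (rule D_inv[OF i j Dsub x]) (use u xj in auto)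
      also have "{s\<in>msgs n t. agree_on D s x \<and> s j = x j \<and> phi s = y'} = {s\<in>msgs n t. agree_on (insert j D) s x \<and> phi s = y'}"
        unfolding agree_on_def by auto
      finally show "card {s\<in>msgs n t. agree_on (insert j D) s (x(j:=u)) \<and> phi s = y'} = card {s\<in>msgs n t. agree_on (insert j D) s x \<and> phi s = y'}" .
    qed
    also have "\<dots> = c * card {s\<in>msgs n t. agree_on (insert j D) s x \<and> phi s = y'}"
      unfolding c_def by simp
    finally show ?thesis .
  qed
  have tot: "card {s\<in>msgs n t. agree_on D s x} = c * card {s\<in>msgs n t. agree_on (insert j D) s x}"
    unfolding tot_sum[of D x] tot_sum[of "insert j D" x] cnt by (simp add: sum_distrib_left)
  show ?thesis unfolding pp_def e1 e2 cnt tot using cpos by simp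
qed

lemma rel_pp:
  assumes "(X, Y) \<in> dash_rel n m A W P"
  shows "\<forall>x\<in>msgs n t. \<forall>y. pp n t phi X x y = pp n t phi Y x y"
  using assms unfolding dash_rel_def
proof (induction rule: trancl.induct)
  case (r_into_trancl X Y)
  then obtain i T where i: "i \<in> {1..m}" and T: "T \<subseteq> {1..n} - B_set n A W i"
    and X: "X \<in> N_fam n A W P i T" and Y: "Y \<in> N_fam n A W P i T" by blast
  have fam: "\<And>Z x y. Z \<in> N_fam n A W P i T \<Longrightarrow> x \<in> msgs n t \<Longrightarrow> pp n t phi Z x y = pp n t phi (T \<union> B_set n A W i) x y"
  proof -
    fix Z x y assume Z: "Z \<in> N_fam n A W P i T" and x: "x \<in> msgs n t"
    then consider (a) jj where "jj \<in> P i" "Z = T \<union> B_set n A W i - {jj}" | (b) "Z = T \<union> B_set n A W i"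
      unfolding N_fam_def by blast
    then show "pp n t phi Z x y = pp n t phi (T \<union> B_set n A W i) x y"
    proof cases
      case a then show ?thesis using pstep[OF i a(1) T x] by simp
    next
      case b then show ?thesis by simp
    qed
  qed
  show ?case using fam[OF X] fam[OF Y] by simp
next
  case (trancl_into_trancl X Y Z)
  then obtain i T where i: "i \<in> {1..m}" and T: "T \<subseteq> {1..n} - B_set n A W i"
    and X: "Y \<in> N_fam n A W P i T" and Y: "Z \<in> N_fam n A W P i T" by blast
  have fam: "\<And>Z x y. Z \<in> N_fam n A W P i T \<Longrightarrow> x \<in> msgs n t \<Longrightarrow> pp n t phi Z x y = pp n t phi (T \<union> B_set n A W i) x y"
  proof -
    fix Z x y assume Z: "Z \<in> N_fam n A W P i T" and x: "x \<in> msgs n t"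
    then consider (a) jj where "jj \<in> P i" "Z = T \<union> B_set n A W i - {jj}" | (b) "Z = T \<union> B_set n A W i"
      unfolding N_fam_def by blast
    then show "pp n t phi Z x y = pp n t phi (T \<union> B_set n A W i) x y"
    proof cases
      case a then show ?thesis using pstep[OF i a(1) T x] by simp
    next
      case b then show ?thesis by simp
    qed
  qed
  show ?case using fam[OF X] fam[OF Y] trancl_into_trancl.IH by simp
qed

lemma no_acyc:
  assumes rel: "(S, S') \<in> dash_rel n m A W P" and k: "k \<in> S'" "k \<notin> S" "k \<in> {1..n}"
    and jj: "jj \<in> {1..m}" "k \<in> W jj" "S \<union> {k} \<subseteq> B_set n A W jj \<union> W jj"
    and tk: "t k > 0"
  shows False
proof -
  define x0 where "x0 = (\<lambda>i. if i \<in> {1..n} then replicate (t i) False else [])"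
  have x0: "x0 \<in> msgs n t" unfolding msgs_def x0_def by simp
  define x1 where "x1 = x0(k := replicate (t k) True)"
  have x1: "x1 \<in> msgs n t" unfolding x1_def by (rule upd_msgs[OF x0 k(3)]) simp
  have neq: "x1 k \<noteq> x0 k" using tk k(3) unfolding x1_def x0_def by (cases "t k") auto
  define y where "y = phi x0"
  have p1: "pp n t phi S x0 y = pp n t phi S' x0 y" using rel_pp[OF rel] x0 by blast
  have "{x'\<in>msgs n t. agree_on ({1..n} - S') x' x0} = {x'\<in>msgs n t. agree_on ({1..n} - S') x' x1}"
    "{x'\<in>msgs n t. agree_on ({1..n} - S') x' x0 \<and> phi x' = y} = {x'\<in>msgs n t. agree_on ({1..n} - S') x' x1 \<and> phi x' = y}"
    using k(1) unfolding agree_on_def x1_def by auto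
  then have p2: "pp n t phi S' x0 y = pp n t phi S' x1 y" unfolding pp_def by simp
  have p3: "pp n t phi S x1 y = pp n t phi S' x1 y" using rel_pp[OF rel] x1 by blast
  have fin1: "finite {x'\<in>msgs n t. agree_on ({1..n} - S) x' x0 \<and> phi x' = y}" using finite_msgs by simp
  have fin2: "finite {x'\<in>msgs n t. agree_on ({1..n} - S) x' x0}" using finite_msgs by simp
  have c1: "card {x'\<in>msgs n t. agree_on ({1..n} - S) x' x0 \<and> phi x' = y} > 0"
    using fin1 x0 agree_refl[of _ x0] unfolding y_def card_gt_0_iff by blast
  have c2: "card {x'\<in>msgs n t. agree_on ({1..n} - S) x' x0} > 0"
    using fin2 x0 agree_refl[of _ x0] unfolding card_gt_0_iff by blast
  have "pp n t phi S x0 y > 0" unfolding pp_def using c1 c2 by simp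
  then have "pp n t phi S x1 y > 0" using p1 p2 p3 by simp
  then have "card {x'\<in>msgs n t. agree_on ({1..n} - S) x' x1 \<and> phi x' = y} \<noteq> 0"
    unfolding pp_def by (metis div_0 less_irrefl of_nat_0)
  then obtain z where z: "z \<in> msgs n t" "agree_on ({1..n} - S) z x1" "phi z = phi x0"
    unfolding y_def by (metis (mono_tags, lifting) card.empty empty_Collect_eq)
  have Ajj: "A jj \<subseteq> {1..n}" "A jj \<inter> (B_set n A W jj \<union> W jj) = {}"
    using wf jj(1) unfolding well_formed_problem_def B_set_def by blast+
  have "agree_on (A jj) z x0"
    unfolding agree_on_def
  proof
    fix a assume a: "a \<in> A jj"
    then have "a \<in> {1..n} - S" "a \<noteq> k" using Ajj jj(3) by blast+
    then show "z a = x0 a" using z(2) unfolding agree_on_def x1_def by auto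
  qed
  moreover have dec: "\<forall>i\<in>{1..m}. \<forall>x\<in>msgs n t. \<forall>x'\<in>msgs n t.
        phi x = phi x' \<and> agree_on (A i) x x' \<longrightarrow> agree_on (W i) x x'"
    using code unfolding secure_index_code_def by (elim conjE)
  ultimately have "agree_on (W jj) z x0"
    using dec[rule_format, OF jj(1) z(1) x0] z(3) by blast
  then have "z k = x0 k" using jj(2) unfolding agree_on_def by blast
  moreover have "z k = x1 k" using z(2) k unfolding agree_on_def by blast
  ultimately show False using neq by simp
qed

end

lemma part1:
  assumes G: "G_conditions n m A W P R g" and SS: "S \<subseteq> S'" "S' \<subseteq> {1..n}"
    and K: "K \<subseteq> S' - S" "acyclic_wrt n m A W S K"
  shows "g S' \<ge> g S + R * real (card K)"
proof -
  obtain ks where ks: "distinct ks" "set ks = K" "K \<subseteq> {1..n} - S"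
    and step: "\<forall>l<length ks. \<exists>j\<in>{1..m}. ks ! l \<in> W j \<and> S \<union> set (take (Suc l) ks) \<subseteq> B_set n A W j \<union> W j"
    using K(2) unfolding acyclic_wrt_def by blast
  have G1: "\<forall>i\<in>{1..m}. \<forall>V. V \<subseteq> W i \<longrightarrow> (\<forall>Bs. Bs \<subseteq> (B_set n A W i \<union> W i) - V \<longrightarrow>
        (\<Sum>k\<in>V. R) = g (Bs \<union> V) - g Bs \<and> g (Bs \<union> V) - g Bs = g V)"
    using G unfolding G_conditions_def by (rule conjunct1)
  have mono: "\<forall>S S'. S \<subseteq> S' \<and> S' \<subseteq> {1..n} \<longrightarrow> g S \<le> g S'"
    using G unfolding G_conditions_def by (elim conjE)
  have ind: "l \<le> length ks \<Longrightarrow> g (S \<union> set (take l ks)) = g S + R * real l" for l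
  proof (induction l)
    case 0 then show ?case by simp
  next
    case (Suc l)
    then have l: "l < length ks" by simp
    obtain j where j: "j \<in> {1..m}" "ks ! l \<in> W j" "S \<union> set (take (Suc l) ks) \<subseteq> B_set n A W j \<union> W j"
      using step l by blast
    have tk: "set (take (Suc l) ks) = set (take l ks) \<union> {ks ! l}"
      using l by (simp add: take_Suc_conv_app_nth)
    have d: "distinct (take l ks @ [ks ! l])"
      using distinct_take[OF ks(1), of "Suc l"] l by (simp add: take_Suc_conv_app_nth)
    have notin: "ks ! l \<notin> S \<union> set (take l ks)"
      using d ks(2,3) l nth_mem[OF l] by auto
    have "(\<Sum>k\<in>{ks ! l}. R) = g ((S \<union> set (take l ks)) \<union> {ks ! l}) - g (S \<union> set (take l ks))"
    proof -
      have Vs: "{ks ! l} \<subseteq> W j" using j(2) by simp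
      have Bs: "S \<union> set (take l ks) \<subseteq> (B_set n A W j \<union> W j) - {ks ! l}" using j(3) tk notin by blast
      show ?thesis using G1[rule_format, OF j(1) Vs Bs] by (elim conjE)
    qed
    then have "g (S \<union> set (take (Suc l) ks)) = g (S \<union> set (take l ks)) + R"
      using tk by (simp add: Un_assoc)
    then show ?case using Suc.IH l by (simp add: algebra_simps)
  qed
  have "g (S \<union> K) = g S + R * real (card K)"
    using ind[of "length ks"] ks(1,2) distinct_card by fastforce
  moreover have "S \<union> K \<subseteq> S'" using SS K(1) by blast
  then have "g (S \<union> K) \<le> g S'" using mono SS(2) by blast
  ultimately show ?thesis by simp
qed

theorem lemma2:
  fixes n m :: nat and A W P :: "nat \<Rightarrow> nat set" and R :: real and g :: "nat set \<Rightarrow> real"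
  assumes "well_formed_problem n m A W P"
    and "feasible n m A W P"
    and "sec_achievable_sym n m A W P R"
    and "G_conditions n m A W P R g"
  shows "(\<forall>S S'. S \<subseteq> S' \<and> S' \<subseteq> {1..n} \<longrightarrow>
            g S' \<ge> g S + R * real (h_MAIS n m A W S S'))
       \<and> (\<forall>S S'. S \<subseteq> S' \<and> S' \<subseteq> {1..n} \<and> (S, S') \<in> dash_rel n m A W P \<longrightarrow>
            h_MAIS n m A W S S' = 0)"
proof -
  have fin: "finite {card K | K. K \<subseteq> S' - S \<and> acyclic_wrt n m A W S K}" if "S' \<subseteq> {1..n}" for S S'
  proof -
    have "{card K | K. K \<subseteq> S' - S \<and> acyclic_wrt n m A W S K} \<subseteq> card ` Pow (S' - S)" by blast
    moreover have "finite (S' - S)" using that finite_subset by blast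
    ultimately show ?thesis using finite_subset by blast
  qed
  have ne: "{card K | K. K \<subseteq> S' - S \<and> acyclic_wrt n m A W S K} \<noteq> {}" for S S'
  proof -
    have "acyclic_wrt n m A W S {}" unfolding acyclic_wrt_def by (rule conjI, simp, rule exI[of _ "[]"], simp)
    then show ?thesis by blast
  qed
  have P1: "g S' \<ge> g S + R * real (h_MAIS n m A W S S')" if "S \<subseteq> S'" "S' \<subseteq> {1..n}" for S S'
  proof -
    have "h_MAIS n m A W S S' \<in> {card K | K. K \<subseteq> S' - S \<and> acyclic_wrt n m A W S K}"
      unfolding h_MAIS_def using Max_in[OF fin[OF that(2)] ne] .
    then obtain K where "h_MAIS n m A W S S' = card K" "K \<subseteq> S' - S" "acyclic_wrt n m A W S K" by blast
    then show ?thesis using part1[OF assms(4) that] by simp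
  qed
  obtain R0 t M phi where R0: "R0 > 0" and code: "secure_index_code n m A W P t M phi"
    and rate: "\<forall>k\<in>{1..n}. R0 \<le> real (t k) / log 2 (real M)"
    using assms(2) unfolding feasible_def sec_achievable_sym_def by blast
  have P2: "h_MAIS n m A W S S' = 0" if "S \<subseteq> S'" "S' \<subseteq> {1..n}" "(S, S') \<in> dash_rel n m A W P" for S S'
  proof -
    have "\<forall>c\<in>{card K | K. K \<subseteq> S' - S \<and> acyclic_wrt n m A W S K}. c = 0"
    proof
      fix c assume "c \<in> {card K | K. K \<subseteq> S' - S \<and> acyclic_wrt n m A W S K}"
      then obtain K where K: "c = card K" "K \<subseteq> S' - S" "acyclic_wrt n m A W S K" by blast
      show "c = 0"
      proof (rule ccontr)
        assume "c \<noteq> 0"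
        then have "K \<noteq> {}" using K(1) by auto
        obtain ks where ks: "distinct ks" "set ks = K" "K \<subseteq> {1..n} - S"
          and step: "\<forall>l<length ks. \<exists>j\<in>{1..m}. ks ! l \<in> W j \<and> S \<union> set (take (Suc l) ks) \<subseteq> B_set n A W j \<union> W j"
          using K(3) unfolding acyclic_wrt_def by blast
        have l0: "0 < length ks" using ks(2) \<open>K \<noteq> {}\<close> by auto
        obtain jj where jj: "jj \<in> {1..m}" "ks ! 0 \<in> W jj" "S \<union> set (take (Suc 0) ks) \<subseteq> B_set n A W jj \<union> W jj"
          using step l0 by blast
        have tk0: "set (take (Suc 0) ks) = {ks ! 0}" using l0 by (cases ks) auto
        have k: "ks ! 0 \<in> S'" "ks ! 0 \<notin> S" "ks ! 0 \<in> {1..n}"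
          using nth_mem[OF l0] ks K(2) by auto
        have "R0 \<le> real (t (ks ! 0)) / log 2 (real M)" using rate k(3) by blast
        then have tpos: "t (ks ! 0) > 0" using R0 by (cases "t (ks ! 0)") auto
        show False
          by (rule no_acyc[OF assms(1) code that(3) k jj(1) jj(2) _ tpos]) (use jj(3) tk0 in simp)
      qed
    qed
    then show ?thesis unfolding h_MAIS_def using Max_in[OF fin[OF that(2)] ne] by blast
  qed
  show ?thesis using P1 P2 by blast
qed

end
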